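(* There exists $r'>0$ such that for every $0<r\le r'$ there exists $p'>0$ with $$\sum_{T\in\bar{\mathcal T}_0}\mathbb P\big[T\text{ is present in }(\Lambda,\mathcal H^{p,r},h)\big]=\infty\qquad\text{for all }0<p\le p'.$$
   Context: $\Lambda=\mathbb Z^3$ with addition, height function $h(i)=-i_3$. Define $\mathrm A_{1,1}=\{(0,1),(1,0)\}$, $\mathrm A_{2,1}=\{(-1,1),(0,0),(1,-1)\}$, $\mathrm A_{1,2}=\mathrm A_{2,2}=\{(0,0)\}$ in $\mathbb Z^2$ and $A_{s,k}:=\{(i_1,i_2,-1):(i_1,i_2)\in\mathrm A_{s,k}\}$. For $p,r\in[0,1]$ let $(\mu(i))_{i\in\Lambda}$ be i.i.d. in $\{0,1,2\}$ with $\mathbb P[\mu=0]=p$, $\mathbb P[\mu=1]=(1-p)r$, $\mathbb P[\mu=2]=(1-p)(1-r)$. Let $\Lambda_0:=\{i:\mu(i)=0\}$ and $\vec H_s:=\{(i,i+j):\mu(i)\ne0,\ j\in A_{s,\mu(i)}\}$ for $s=1,2$ (this random typed graph is $\mathcal H^{p,r}$; it corresponds to applying the zero map, $x\mapsto\bigvee_s\bigwedge_{j\in A_{s,1}}x(i+j)$, or the identity $x\mapsto x(i+(0,0,-1))$). Height cycle: $n\in\{0,2,4,\dots\}$ and $\psi:\{0,\dots,n\}\to\Lambda$ with $\psi_0=\psi_n$ and, writing $\nabla_v:=h(\psi_v)-h(\psi_{v-1})$, $\nabla_1=1$, $\nabla_n=-1$, $\nabla_v\in\{-1,1\}$ for $1<v<n$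 (when $n\ge2$). Let $V'_\circ:=\{0<v<n:\nabla_v=-1,\nabla_{v+1}=1\}$, $V'_\ast:=\{0<v<n:\nabla_v=1,\nabla_{v+1}=-1\}$, $V'_1:=\{0<v<n:\nabla_v=\nabla_{v+1}=1\}\cup\{0\}$, $V'_2:=\{0<v<n:\nabla_v=\nabla_{v+1}=-1\}\cup\{n\}$ (for $n=0$, $V'_\ast:=\{0\}$). A Toom cycle is a height cycle with (i) $\psi_v\ne\psi_w$ for $v\in V'_\ast$, $w\ne v$; (ii) if $\psi_v=\psi_w$ with $v\in V'_s$, $w\in V'_t$, $s,t\in\{1,\circ,2\}$ and $s\le t$ in the order $1<\circ<2$, then $v\le w$. It is rooted at $\psi_0$; $\bar{\mathcal T}_0$ is the set of Toom cycles rooted at $(0,0,0)$. Let $\vec E_1:=\{(v-1,v):\nabla_v=1\}$, $\vec E_2:=\{(v,v-1):\nabla_v=-1\}$. A Toom cycle of length $n\ge2$ is present if (i) $\psi_v\in\Lambda_0$ for $v\in V'_\ast$; (ii) $(\psi_v,\psi_w)\in\vec H_s$ for all $(v,w)\in\vec E_s$ with $v\in V'_s$ ($s=1,2$); (iii) $(\psi_v,\psi_w)\in\vec H_{3-s}$ for all $(v,w)\in\vec E_s$ with $v\in V'_\circ$. A Toom cycle of length $0$ is present if $\psi_0\in\Lambda_0$. *)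

theory Defs
  imports "HOL-Probability.Probability"
begin

type_synonym pt = "int \<times> int \<times> int"

definition padd :: "pt \<Rightarrow> pt \<Rightarrow> pt" where
  "padd a b = (fst a + fst b, fst (snd a) + fst (snd b), snd (snd a) + snd (snd b))"

definition ht :: "pt \<Rightarrow> int" where
  "ht i = - snd (snd i)"

text \<open>Offset sets A_{s,k} (already lifted to third coordinate -1).\<close>
definition Aset :: "nat \<Rightarrow> nat \<Rightarrow> pt set" where
  "Aset s k =
     (if k = 1 then (if s = 1 then {(0,1,-1), (1,0,-1)} else {(-1,1,-1), (0,0,-1), (1,-1,-1)})
      else {(0,0,-1)})"

definition Hs :: "(pt \<Rightarrow> nat) \<Rightarrow> nat \<Rightarrow> (pt \<times> pt) set" where
  "Hs mu s = {(i, padd i j) | i j. mu i \<noteq> 0 \<and> j \<in> Aset s (mu i)}"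

text \<open>A cycle (psi_0,...,psi_n) is represented as the list [psi_0,...,psi_n].\<close>
definition clen :: "pt list \<Rightarrow> nat" where
  "clen ps = length ps - 1"

definition nab :: "pt list \<Rightarrow> nat \<Rightarrow> int" where
  "nab ps v = ht (ps ! v) - ht (ps ! (v - 1))"

definition height_cycle :: "pt list \<Rightarrow> bool" where
  "height_cycle ps \<longleftrightarrow> ps \<noteq> [] \<and> even (clen ps) \<and> ps ! 0 = ps ! clen ps \<and>
     (2 \<le> clen ps \<longrightarrow> nab ps 1 = 1 \<and> nab ps (clen ps) = -1 \<and>
        (\<forall>v. 1 < v \<and> v < clen ps \<longrightarrow> nab ps v \<in> {-1, 1}))"

definition Vstar :: "pt list \<Rightarrow> nat set" where
  "Vstar ps = (if clen ps = 0 then {0}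
     else {v. 0 < v \<and> v < clen ps \<and> nab ps v = 1 \<and> nab ps (v+1) = -1})"

definition Vcirc :: "pt list \<Rightarrow> nat set" where
  "Vcirc ps = {v. 0 < v \<and> v < clen ps \<and> nab ps v = -1 \<and> nab ps (v+1) = 1}"

definition V1 :: "pt list \<Rightarrow> nat set" where
  "V1 ps = {v. 0 < v \<and> v < clen ps \<and> nab ps v = 1 \<and> nab ps (v+1) = 1} \<union> {0}"

definition V2 :: "pt list \<Rightarrow> nat set" where
  "V2 ps = {v. 0 < v \<and> v < clen ps \<and> nab ps v = -1 \<and> nab ps (v+1) = -1} \<union> {clen ps}"

text \<open>Types ordered 1 < circ < 2 encoded as 0 < 1 < 2.\<close>
definition Vtyp :: "pt list \<Rightarrow> nat \<Rightarrow> nat set" where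
  "Vtyp ps k = (if k = 0 then V1 ps else if k = 1 then Vcirc ps else V2 ps)"

definition toom_cycle :: "pt list \<Rightarrow> bool" where
  "toom_cycle ps \<longleftrightarrow> height_cycle ps \<and>
     (\<forall>v \<in> Vstar ps. \<forall>w \<le> clen ps. w \<noteq> v \<longrightarrow> ps ! v \<noteq> ps ! w) \<and>
     (\<forall>s t v w. s \<le> t \<and> t \<le> 2 \<and> v \<in> Vtyp ps s \<and> w \<in> Vtyp ps t \<and> ps ! v = ps ! w
        \<longrightarrow> v \<le> w)"

definition Toom0 :: "pt list set" where
  "Toom0 = {ps. toom_cycle ps \<and> ps ! 0 = (0,0,0)}"

definition Eset :: "pt list \<Rightarrow> nat \<Rightarrow> (nat \<times> nat) set" where
  "Eset ps s = (if s = 1 then {(v - 1, v) | v. 1 \<le> v \<and> v \<le> clen ps \<and> nab ps v = 1}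
                else {(v, v - 1) | v. 1 \<le> v \<and> v \<le> clen ps \<and> nab ps v = -1})"

definition Vs :: "pt list \<Rightarrow> nat \<Rightarrow> nat set" where
  "Vs ps s = (if s = 1 then V1 ps else V2 ps)"

definition present :: "(pt \<Rightarrow> nat) \<Rightarrow> pt list \<Rightarrow> bool" where
  "present mu ps \<longleftrightarrow>
     (if clen ps = 0 then mu (ps ! 0) = 0
      else (\<forall>v \<in> Vstar ps. mu (ps ! v) = 0) \<and>
           (\<forall>s \<in> {1,2}. \<forall>(v, w) \<in> Eset ps s. v \<in> Vs ps s \<longrightarrow> (ps ! v, ps ! w) \<in> Hs mu s) \<and>
           (\<forall>s \<in> {1,2}. \<forall>(v, w) \<in> Eset ps s. v \<in> Vcirc ps \<longrightarrow> (ps ! v, ps ! w) \<in> Hs mu (3 - s)))"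

definition mu_pmf :: "real \<Rightarrow> real \<Rightarrow> nat pmf" where
  "mu_pmf p r = bind_pmf (bernoulli_pmf p)
     (\<lambda>b. if b then return_pmf 0 else map_pmf (\<lambda>c. if c then 1 else 2) (bernoulli_pmf r))"

definition Mpr :: "real \<Rightarrow> real \<Rightarrow> (pt \<Rightarrow> nat) measure" where
  "Mpr p r = PiM UNIV (\<lambda>_. measure_pmf (mu_pmf p r))"

end

theory Submission
  imports Defs "HOL-Real_Asymp.Real_Asymp"
begin


definition sig :: "int list \<Rightarrow> nat \<Rightarrow> int" where "sig w j = sum_list (take j w)"

definition Pt :: "int list \<Rightarrow> nat \<Rightarrow> pt" where
 "Pt w k = (if k = 0 then (0,0,0)
   else if k \<le> length w + 1 then (1 + sig w (k-1), - sig w (k-1), int k - 2)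
   else if k \<le> 2*length w + 3 then (1, -1, 2*int (length w) + 2 - int k)
   else (0,0,0))"

definition cyc :: "int list \<Rightarrow> pt list" where "cyc w = map (Pt w) [0..<2*length w + 5]"

lemma clen_cyc[simp]: "clen (cyc w) = 2*length w + 4"
  by (simp add: clen_def cyc_def)

lemma nth_cyc: "k \<le> 2 * length w + 4 \<Longrightarrow> cyc w ! k = Pt w k"
  unfolding cyc_def by (subst nth_map) auto

lemma ht_Pt: "ht (Pt w k) = (if k=0 then 0 else if k \<le> length w+1 then 2 - int k
   else if k \<le> 2*length w+3 then int k - 2*int (length w) - 2 else 0)"
  by (simp add: Pt_def ht_def)

lemma nab_cyc: "1 \<le> v \<Longrightarrow> v \<le> 2*length w+4 \<Longrightarrow>
  nab (cyc w) v = (if v = 1 \<or> (length w+3 \<le> v \<and> v \<le> 2*length w+3) then 1 else -1)"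
  unfolding nab_def by (simp add: nth_cyc ht_Pt of_nat_diff) presburger

lemma Pt_inj: "k < 2*length w+4 \<Longrightarrow> l < 2*length w+4 \<Longrightarrow> Pt w k = Pt w l \<Longrightarrow> k = l"
  unfolding Pt_def by (auto split: if_splits)

lemma Pt_last: "Pt w (2*length w+4) = Pt w 0"
  unfolding Pt_def by simp

lemma hc_cyc: "height_cycle (cyc w)"
proof -
  have "cyc w ! 0 = cyc w ! clen (cyc w)" by (simp add: nth_cyc Pt_last)
  moreover have "nab (cyc w) 1 = 1" by (simp add: nab_cyc)
  moreover have "nab (cyc w) (clen (cyc w)) = -1" by (simp add: nab_cyc)
  moreover have "\<forall>v. 1 < v \<and> v < clen (cyc w) \<longrightarrow> nab (cyc w) v \<in> {-1, 1}" by (simp add: nab_cyc)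
  moreover have "cyc w \<noteq> []" by (simp add: cyc_def)
  ultimately show ?thesis unfolding height_cycle_def by simp
qed

lemma Vtyp_le: "v \<in> Vtyp ps s \<Longrightarrow> v \<le> clen ps"
  unfolding Vtyp_def V1_def V2_def Vcirc_def by (auto split: if_splits)

lemma Vtyp_n: "0 < clen ps \<Longrightarrow> clen ps \<in> Vtyp ps s \<Longrightarrow> s \<noteq> 0 \<and> s \<noteq> 1"
  unfolding Vtyp_def V1_def V2_def Vcirc_def by (auto split: if_splits)

lemma Vtyp_0: "0 < clen ps \<Longrightarrow> 0 \<in> Vtyp ps s \<Longrightarrow> s = 0 \<or> s = 1"
  unfolding Vtyp_def V1_def V2_def Vcirc_def by (auto split: if_splits)

lemma toom_generic:
  assumes hc: "height_cycle ps" and n0: "0 < clen ps" and last: "ps ! clen ps = ps ! 0"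
  and inj: "\<And>k l. k < clen ps \<Longrightarrow> l < clen ps \<Longrightarrow> ps!k = ps!l \<Longrightarrow> k = l"
  shows "toom_cycle ps"
proof -
  have A: "\<forall>v \<in> Vstar ps. \<forall>w \<le> clen ps. w \<noteq> v \<longrightarrow> ps ! v \<noteq> ps ! w"
  proof (intro ballI allI impI)
    fix v w assume v: "v \<in> Vstar ps" and w: "w \<le> clen ps" "w \<noteq> v"
    from v n0 have v': "0 < v" "v < clen ps" unfolding Vstar_def by auto
    show "ps ! v \<noteq> ps ! w"
    proof
      assume eq: "ps ! v = ps ! w"
      show False
      proof (cases "w = clen ps")
        case True
        with eq last have "ps ! v = ps ! 0" by simp
        with inj[of v 0] v' n0 show False by simp
      next
        case False
        with w have "w < clen ps" by simp
        with inj[of v w] v' eq w show False by simp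
      qed
    qed
  qed
  have B: "\<forall>s t v w. s \<le> t \<and> t \<le> 2 \<and> v \<in> Vtyp ps s \<and> w \<in> Vtyp ps t \<and> ps ! v = ps ! w
        \<longrightarrow> v \<le> w"
  proof (intro allI impI)
    fix s t v w assume H: "s \<le> t \<and> t \<le> 2 \<and> v \<in> Vtyp ps s \<and> w \<in> Vtyp ps t \<and> ps ! v = ps ! w"
    then have vl: "v \<le> clen ps" and wl: "w \<le> clen ps" using Vtyp_le by blast+
    show "v \<le> w"
    proof (cases "v = clen ps")
      case True
      with H Vtyp_n[OF n0] have "t = 2" by force
      show ?thesis
      proof (cases "w = clen ps")
        case True with vl show ?thesis by simp
      next
        case False
        with wl have "w < clen ps" by simp
        moreover have "ps ! w = ps ! 0" using H True last by simp
        ultimately have "w = 0" using inj[of w 0] n0 by simp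
        with H \<open>t = 2\<close> Vtyp_0[OF n0] show ?thesis by force
      qed
    next
      case False
      with vl have v': "v < clen ps" by simp
      show ?thesis
      proof (cases "w = clen ps")
        case True with vl show ?thesis by simp
      next
        case False
        with wl have "w < clen ps" by simp
        with inj[of v w] v' H show ?thesis by simp
      qed
    qed
  qed
  from hc A B show ?thesis unfolding toom_cycle_def by blast
qed

lemma toom_cyc: "toom_cycle (cyc w)"
  by (rule toom_generic[OF hc_cyc]) (auto simp: nth_cyc Pt_last intro: Pt_inj)

lemma Toom0_cyc: "cyc w \<in> Toom0"
  unfolding Toom0_def by (simp add: toom_cyc nth_cyc Pt_def)

lemma Hs_iff: "(a, b) \<in> Hs mu s \<longleftrightarrow> mu a \<noteq> 0 \<and> (\<exists>j\<in>Aset s (mu a). b = padd a j)"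
  unfolding Hs_def by blast

definition SS :: "int list \<Rightarrow> nat \<Rightarrow> nat set" where
 "SS w k = (if k = 0 then {1} else if k = 1 then {0}
    else if k \<le> length w + 1 then (if w!(k-2) = 0 then {1,2} else {1})
    else if k = length w + 2 then {1}
    else if k \<le> 2*length w + 2 then {2} else {0})"

lemma sig_step: "i < length w \<Longrightarrow> sig w (Suc i) = sig w i + w ! i"
  unfolding sig_def by (simp add: take_Suc_conv_app_nth)

lemma Vstar_cyc: "v \<in> Vstar (cyc w) \<Longrightarrow> v = 1 \<or> v = 2*length w+3"
  unfolding Vstar_def by (auto simp: nab_cyc split: if_splits)

lemma Vcirc_cyc: "v \<in> Vcirc (cyc w) \<Longrightarrow> v = length w+2"
  unfolding Vcirc_def by (auto simp: nab_cyc split: if_splits)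

lemma V1_cyc: "v \<in> V1 (cyc w) \<Longrightarrow> v = 0 \<or> (length w+3 \<le> v \<and> v \<le> 2*length w+2)"
  unfolding V1_def by (auto simp: nab_cyc split: if_splits)

lemma V2_cyc: "v \<in> V2 (cyc w) \<Longrightarrow> (2 \<le> v \<and> v \<le> length w+1) \<or> v = 2*length w+4"
  unfolding V2_def by (auto simp: nab_cyc split: if_splits)

lemma E1_cyc: "(v,u) \<in> Eset (cyc w) 1 \<Longrightarrow> v = u-1 \<and> 1 \<le> u \<and> (u = 1 \<or> (length w+3 \<le> u \<and> u \<le> 2*length w+3))"
  unfolding Eset_def by (auto simp: nab_cyc split: if_splits)

lemma E2_cyc: "(v,u) \<in> Eset (cyc w) 2 \<Longrightarrow> u = v-1 \<and> 2 \<le> v \<and> v \<le> 2*length w+4 \<and> \<not> (length w+3 \<le> v \<and> v \<le> 2*length w+3)"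
  unfolding Eset_def by (auto simp: nab_cyc split: if_splits)

lemma edge_root: "mu (Pt w 0) = 1 \<Longrightarrow> (Pt w 0, Pt w 1) \<in> Hs mu 1"
  by (simp add: Hs_iff Aset_def Pt_def padd_def sig_def)

lemma edge_U2: "length w+3 \<le> v \<Longrightarrow> v \<le> 2*length w+2 \<Longrightarrow> mu (Pt w v) = 2 \<Longrightarrow> (Pt w v, Pt w (Suc v)) \<in> Hs mu 1"
  by (simp add: Hs_iff Aset_def Pt_def padd_def)

lemma edge_C2: "mu (Pt w (length w+2)) = 1 \<Longrightarrow> (Pt w (length w+2), Pt w (length w+3)) \<in> Hs mu 2"
  by (simp add: Hs_iff Aset_def Pt_def padd_def)

lemma edge_C1: "sig w (length w) = 0 \<Longrightarrow> mu (Pt w (length w+2)) = 1 \<Longrightarrow> (Pt w (length w+2), Pt w (length w+1)) \<in> Hs mu 1"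
  by (simp add: Hs_iff Aset_def Pt_def padd_def)

lemma edge_R: "mu (Pt w 0) = 1 \<Longrightarrow> (Pt w (2*length w+4), Pt w (2*length w+3)) \<in> Hs mu 2"
  by (simp add: Hs_iff Aset_def Pt_def padd_def)

lemma edge_D:
  assumes u: "2 \<le> u" "u \<le> length w+1" and ws: "set w \<subseteq> {-1,0,1}" and m: "mu (Pt w u) \<in> SS w u"
  shows "(Pt w u, Pt w (u-1)) \<in> Hs mu 2"
proof -
  obtain i where i: "u = Suc (Suc i)" using u by (metis add_2_eq_Suc le_Suc_ex)
  with u have il: "i < length w" by simp
  have st: "sig w (Suc i) = sig w i + w ! i" using sig_step[OF il] .
  have wi: "w ! i \<in> {-1,0,1}" using ws il nth_mem by blast
  have P1: "Pt w u = (1 + sig w (Suc i), - sig w (Suc i), int i)" using i il by (simp add: Pt_def)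
  have P2: "Pt w (u-1) = (1 + sig w i, - sig w i, int i - 1)" using i il by (simp add: Pt_def)
  have SSu: "SS w u = (if w!i = 0 then {1,2} else {1})" using i il by (simp add: SS_def)
  show ?thesis
    using wi m unfolding Hs_iff P1 P2 SSu st
    by (auto simp: Aset_def padd_def split: if_splits)
qed

lemma present_cyc:
  assumes ws: "set w \<subseteq> {-1,0,1}" and s0: "sig w (length w) = 0"
    and m: "\<forall>k<2*length w+4. mu (Pt w k) \<in> SS w k"
  shows "present mu (cyc w)"
proof -
  let ?M = "length w"
  have m0: "mu (Pt w 0) = 1" using m[rule_format, of 0] by (simp add: SS_def)
  have mC: "mu (Pt w (?M+2)) = 1" using m[rule_format, of "?M+2"] by (simp add: SS_def)
  have a: "\<forall>v \<in> Vstar (cyc w). mu (cyc w ! v) = 0"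
  proof
    fix v assume "v \<in> Vstar (cyc w)"
    then have "v = 1 \<or> v = 2*?M+3" by (rule Vstar_cyc)
    moreover have "mu (Pt w 1) = 0" using m[rule_format, of 1] by (simp add: SS_def)
    moreover have "mu (Pt w (2*?M+3)) = 0" using m[rule_format, of "2*?M+3"] by (simp add: SS_def)
    ultimately show "mu (cyc w ! v) = 0" by (auto simp: nth_cyc)
  qed
  have b1: "\<forall>(v, u) \<in> Eset (cyc w) 1. v \<in> Vs (cyc w) 1 \<longrightarrow> (cyc w ! v, cyc w ! u) \<in> Hs mu 1"
  proof (clarify)
    fix v u assume e: "(v,u) \<in> Eset (cyc w) 1" and vs: "v \<in> Vs (cyc w) 1"
    from vs have "v = 0 \<or> (?M+3 \<le> v \<and> v \<le> 2*?M+2)" unfolding Vs_def using V1_cyc by simp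
    moreover from E1_cyc[OF e] have eu: "v = u-1 \<and> 1 \<le> u \<and> (u = 1 \<or> (?M+3 \<le> u \<and> u \<le> 2*?M+3))" .
    ultimately consider "v = 0" "u = 1" | "?M+3 \<le> v" "v \<le> 2*?M+2" "u = Suc v" by force
    then show "(cyc w ! v, cyc w ! u) \<in> Hs mu 1"
    proof cases
      case 1 then show ?thesis using edge_root[of mu w, OF m0] by (simp add: nth_cyc)
    next
      case 2
      have "mu (Pt w v) = 2" using m[rule_format, of v] 2 by (simp add: SS_def)
      then show ?thesis using edge_U2[of w v mu] 2 by (simp add: nth_cyc)
    qed
  qed
  have b2: "\<forall>(v, u) \<in> Eset (cyc w) 2. v \<in> Vs (cyc w) 2 \<longrightarrow> (cyc w ! v, cyc w ! u) \<in> Hs mu 2"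
  proof (clarify)
    fix v u assume e: "(v,u) \<in> Eset (cyc w) 2" and vs: "v \<in> Vs (cyc w) 2"
    from vs have "(2 \<le> v \<and> v \<le> ?M+1) \<or> v = 2*?M+4" unfolding Vs_def using V2_cyc by simp
    moreover from E2_cyc[OF e] have eu: "u = v-1" by simp
    ultimately consider "2 \<le> v" "v \<le> ?M+1" "u = v - 1" | "v = 2*?M+4" "u = 2*?M+3" by force
    then show "(cyc w ! v, cyc w ! u) \<in> Hs mu 2"
    proof cases
      case 1
      have "mu (Pt w v) \<in> SS w v" using m 1 by simp
      then show ?thesis using edge_D[OF 1(1,2) ws] 1 by (simp add: nth_cyc)
    next
      case 2 then show ?thesis using edge_R[of mu w, OF m0] by (simp add: nth_cyc)
    qed
  qed
  have c: "\<forall>s \<in> {1,2}. \<forall>(v, u) \<in> Eset (cyc w) s. v \<in> Vcirc (cyc w) \<longrightarrow> (cyc w ! v, cyc w ! u) \<in> Hs mu (3 - s)"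
  proof (clarify)
    fix s v u assume s: "s \<in> {1,2::nat}" and e: "(v,u) \<in> Eset (cyc w) s" and vc: "v \<in> Vcirc (cyc w)"
    from vc have v: "v = ?M+2" by (rule Vcirc_cyc)
    show "(cyc w ! v, cyc w ! u) \<in> Hs mu (3 - s)"
    proof (cases "s = 1")
      case True
      with e E1_cyc v have "u = ?M+3" by fastforce
      then show ?thesis using True v edge_C2[of mu w, OF mC] by (simp add: nth_cyc)
    next
      case False
      with s have s2: "s = 2" by simp
      with e E2_cyc v have "u = ?M+1" by fastforce
      then show ?thesis using s2 v edge_C1[of w mu, OF s0 mC] by (simp add: nth_cyc)
    qed
  qed
  show ?thesis unfolding present_def using a b1 b2 c by simp
qed



lemma coord_meas: "(\<lambda>mu. mu a) \<in> Mpr p r \<rightarrow>\<^sub>M count_space UNIV"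
proof -
  have 1: "(\<lambda>mu. mu a) \<in> Mpr p r \<rightarrow>\<^sub>M measure_pmf (mu_pmf p r)"
    unfolding Mpr_def by (rule measurable_component_singleton) auto
  have "sets (measure_pmf (mu_pmf p r)) = sets (count_space UNIV)" by simp
  from measurable_cong_sets[OF refl this, of "Mpr p r"] 1 show ?thesis by simp
qed

lemma pred_coord[measurable]: "Measurable.pred (Mpr p r) (\<lambda>mu. P (mu a))"
  by (rule measurable_compose[OF coord_meas]) simp

lemma finE: "finite (Eset ps s)"
proof -
  have "Eset ps s \<subseteq> {..clen ps} \<times> {..clen ps}" unfolding Eset_def by auto
  then show ?thesis by (rule finite_subset) auto
qed

lemma finVstar: "finite (Vstar ps)"
  unfolding Vstar_def by auto

lemma pres_meas: "Measurable.pred (Mpr p r) (\<lambda>mu. present mu T)"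
  unfolding present_def Hs_iff case_prod_beta
  by (measurable; simp add: finE finVstar)

lemma pmf_mu:
  assumes "0 \<le> p" "p \<le> 1" "0 \<le> r" "r \<le> 1"
  shows "pmf (mu_pmf p r) 0 = p" "pmf (mu_pmf p r) 1 = (1-p)*r" "pmf (mu_pmf p r) 2 = (1-p)*(1-r)"
proof -
  have a: "{x::bool. x} = {True}" "{x::bool. \<not> x} = {False}" by auto
  show "pmf (mu_pmf p r) 0 = p" "pmf (mu_pmf p r) 1 = (1-p)*r" "pmf (mu_pmf p r) 2 = (1-p)*(1-r)"
  using assms by (simp_all add: mu_pmf_def pmf_bind pmf_map vimage_def a measure_pmf_single)
qed

lemma ev_bound:
  assumes ws: "set w \<subseteq> {-1,0,1}" and s0: "sig w (length w) = 0"
  shows "(\<Prod>k<2*length w+4. emeasure (measure_pmf (mu_pmf p r)) (SS w k))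
     \<le> emeasure (Mpr p r) {mu \<in> space (Mpr p r). present mu (cyc w)}"
proof -
  let ?n = "2*length w+4"
  let ?q = "measure_pmf (mu_pmf p r)"
  let ?F = "Pt w ` {..<?n}"
  let ?S = "\<lambda>x. SS w (inv_into {..<?n} (Pt w) x)"
  let ?E = "prod_emb UNIV (\<lambda>_. ?q) ?F (PiE ?F ?S)"
  have inj: "inj_on (Pt w) {..<?n}" by (rule inj_onI) (auto intro: Pt_inj)
  have "emeasure (Mpr p r) ?E = (\<Prod>x\<in>?F. emeasure ?q (?S x))"
    unfolding Mpr_def
    by (rule emeasure_PiM_emb) (auto simp: measure_pmf.prob_space_axioms)
  also have "\<dots> = (\<Prod>k<?n. emeasure ?q (SS w k))"
    by (subst prod.reindex[OF inj]) (simp add: inv_into_f_f[OF inj])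
  finally have eq: "emeasure (Mpr p r) ?E = (\<Prod>k<?n. emeasure ?q (SS w k))" .
  have sub: "?E \<subseteq> {mu \<in> space (Mpr p r). present mu (cyc w)}"
  proof
    fix mu assume "mu \<in> ?E"
    then have "restrict mu ?F \<in> PiE ?F ?S" by (simp add: prod_emb_iff)
    then have "\<forall>k<?n. mu (Pt w k) \<in> SS w k"
      using inv_into_f_f[OF inj] by (auto simp: PiE_iff)
    then have "present mu (cyc w)" by (rule present_cyc[OF ws s0])
    moreover have "mu \<in> space (Mpr p r)" by (simp add: Mpr_def space_PiM)
    ultimately show "mu \<in> {mu \<in> space (Mpr p r). present mu (cyc w)}" by simp
  qed
  have "{mu \<in> space (Mpr p r). present mu (cyc w)} \<in> sets (Mpr p r)"
    using pres_meas[where T="cyc w" and p=p and r=r] by (simp add: pred_def)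
  from emeasure_mono[OF sub this] eq show ?thesis by simp
qed



definition wt :: "real \<Rightarrow> int \<Rightarrow> real" where "wt r x = (if x = 0 then 1 else r)"
definition weight :: "real \<Rightarrow> int list \<Rightarrow> real" where "weight r w = prod_list (map (wt r) w)"

lemma weight_nth: "weight r w = (\<Prod>i<length w. wt r (w!i))"
  unfolding weight_def
proof (induction w)
  case (Cons a w) then show ?case unfolding length_Cons prod.lessThan_Suc_shift by simp
qed simp

lemma prod_split:
  fixes g :: "nat \<Rightarrow> real"
  shows "prod g {..<2*M+4} = g 0 * g 1 * (\<Prod>i<M. g (i+2)) * g (M+2) * (\<Prod>i<M. g (i+(M+3))) * g (2*M+3)"
proof -
  have c: "\<And>a b c. a \<le> b \<Longrightarrow> b \<le> c \<Longrightarrow> prod g {a..<c} = prod g {a..<b} * prod g {b..<c}"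
    by (simp add: prod.atLeastLessThan_concat)
  have "prod g {..<2*M+4} = prod g {0..<2*M+4}" by (simp add: atLeast0LessThan)
  also have "\<dots> = prod g {0..<2} * prod g {2..<M+2} * prod g {M+2..<M+3} * prod g {M+3..<2*M+3} * prod g {2*M+3..<2*M+4}"
    using c[of 0 2 "2*M+4"] c[of 2 "M+2" "2*M+4"] c[of "M+2" "M+3" "2*M+4"] c[of "M+3" "2*M+3" "2*M+4"]
    by (simp add: mult.assoc)
  also have "prod g {0..<2} = g 0 * g 1" by (simp add: numeral_2_eq_2)
  also have "prod g {2..<M+2} = (\<Prod>i<M. g (i+2))"
    using prod.shift_bounds_nat_ivl[of g 0 2 M] by (simp only: add_0 atLeast0LessThan)
  also have "prod g {M+3..<2*M+3} = (\<Prod>i<M. g (i+(M+3)))"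
    using prod.shift_bounds_nat_ivl[of g 0 "M+3" M] by (simp only: add_0 atLeast0LessThan mult_2 add_ac)
  also have "prod g {M+2..<M+3} = g (M+2)" by (simp add: numeral_3_eq_3)
  also have "prod g {2*M+3..<2*M+4} = g (2*M+3)" by (simp add: numeral_3_eq_3 numeral_Bit0)
  finally show ?thesis by simp
qed

lemma mSS:
  assumes "0 \<le> p" "p \<le> 1" "0 \<le> r" "r \<le> 1"
  shows "measure (measure_pmf (mu_pmf p r)) (SS w k) =
    (if k=0 then (1-p)*r else if k=1 then p else if k \<le> length w+1 then (1-p) * wt r (w!(k-2))
     else if k = length w+2 then (1-p)*r else if k \<le> 2*length w+2 then (1-p)*(1-r) else p)"
proof -
  note pm = pmf_mu[OF assms]
  have pm1: "pmf (mu_pmf p r) (Suc 0) = (1-p)*r" using pm(2) by simp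
  show ?thesis using assms unfolding SS_def wt_def
    by (simp add: measure_measure_pmf_finite pm pm1 algebra_simps)
qed

lemma prod_SS:
  assumes "0 \<le> p" "p \<le> 1" "0 \<le> r" "r \<le> 1"
  shows "(\<Prod>k<2*length w+4. measure (measure_pmf (mu_pmf p r)) (SS w k))
     = ((1-p)*r*p)^2 * ((1-p)^2*(1-r))^(length w) * weight r w"
proof -
  let ?M = "length w"
  have 1: "(\<Prod>i<?M. measure (measure_pmf (mu_pmf p r)) (SS w (i+2))) = (1-p)^?M * weight r w"
    using assms by (simp add: mSS weight_nth prod.distrib)
  have 2: "(\<Prod>i<?M. measure (measure_pmf (mu_pmf p r)) (SS w (i+(?M+3)))) = ((1-p)*(1-r))^?M"
    using assms by (simp add: mSS)
  have e: "((1-p)^2*(1-r))^?M = (1-p)^?M * ((1-p)*(1-r))^?M"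
    by (simp add: power_mult_distrib power2_eq_square)
  have g: "measure (measure_pmf (mu_pmf p r)) (SS w 0) = (1-p)*r"
     "measure (measure_pmf (mu_pmf p r)) (SS w 1) = p"
     "measure (measure_pmf (mu_pmf p r)) (SS w (?M+2)) = (1-p)*r"
     "measure (measure_pmf (mu_pmf p r)) (SS w (2*?M+3)) = p"
    using assms by (simp_all add: mSS)
  show ?thesis
    unfolding prod_split 1 2 g e power2_eq_square by (simp add: mult_ac power_mult_distrib)
qed



definition LL :: "nat \<Rightarrow> int list set" where "LL m = {u. set u \<subseteq> {-1,0,1} \<and> length u = m}"

lemma finite_LL: "finite (LL m)"
  unfolding LL_def by (rule finite_lists_length_eq) simp

lemma weight_Cons[simp]: "weight r (a#u) = wt r a * weight r u"
  by (simp add: weight_def)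

lemma weight_append: "weight r (u@v) = weight r u * weight r v"
  by (simp add: weight_def)

lemma weight_nonneg: "0 \<le> r \<Longrightarrow> 0 \<le> weight r u"
  unfolding weight_def wt_def by (induction u) auto

lemma weight_uminus: "weight r (map uminus u) = weight r u"
  unfolding weight_def wt_def by (induction u) auto

lemma tot: "(\<Sum>u\<in>LL m. weight r u) = (1+2*r)^m"
proof (induction m)
  case 0
  have "LL 0 = {[]}" unfolding LL_def by auto
  then show ?case by (simp add: weight_def)
next
  case (Suc m)
  have e: "LL (Suc m) = (\<lambda>(xs, n). n#xs) ` (LL m \<times> {-1,0,1})"
    unfolding LL_def by (rule lists_length_Suc_eq)
  have inj: "inj_on (\<lambda>(xs, n). n#xs) (LL m \<times> {-1,0,1::int})"
    by (rule inj_onI) auto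
  have "(\<Sum>u\<in>LL (Suc m). weight r u) = (\<Sum>(xs,n)\<in>LL m \<times> {-1,0,1}. wt r n * weight r xs)"
    unfolding e by (subst sum.reindex[OF inj]) (simp add: case_prod_beta)
  also have "\<dots> = (\<Sum>xs\<in>LL m. weight r xs) * (\<Sum>n\<in>{-1,0,1}. wt r n)"
    unfolding sum_product sum.cartesian_product by (intro sum.cong refl) (auto simp: mult.commute)
  also have "(\<Sum>n\<in>{-1,0,1::int}. wt r n) = 1 + 2*r" by (simp add: wt_def)
  finally show ?case using Suc by simp
qed

lemma abs_sum_list: "set u \<subseteq> {-1,0,1} \<Longrightarrow> \<bar>sum_list u\<bar> \<le> int (length u)"
  by (induction u) auto

definition aa :: "real \<Rightarrow> nat \<Rightarrow> int \<Rightarrow> real" where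
  "aa r m s = (\<Sum>u\<in>{u\<in>LL m. sum_list u = s}. weight r u)"

lemma aa_sum: "(\<Sum>s\<in>{-int m..int m}. aa r m s) = (1+2*r)^m"
proof -
  have "(\<Sum>s\<in>{-int m..int m}. aa r m s) = (\<Sum>u\<in>LL m. weight r u)"
    unfolding aa_def
    by (rule sum.group[OF finite_LL]) (auto simp: LL_def dest!: abs_sum_list)
  then show ?thesis by (simp add: tot)
qed

lemma aa_big: assumes r: "0 \<le> r" shows "\<exists>s. (1+2*r)^m / (2*real m+1) \<le> aa r m s"
proof (rule ccontr)
  assume "\<not> ?thesis"
  then have lt: "\<And>s. aa r m s < (1+2*r)^m / (2*real m+1)" by (simp add: not_le)
  have "(\<Sum>s\<in>{-int m..int m}. aa r m s) < (\<Sum>s\<in>{-int m..int m}. (1+2*r)^m / (2*real m+1))"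
    by (rule sum_strict_mono) (use lt in auto)
  also have "\<dots> = (1+2*r)^m"
  proof -
    have "card {-int m..int m} = 2*m+1" by simp
    moreover have "(2*real m+1) \<noteq> 0" by simp
    ultimately show ?thesis by (simp add: add.commute)
  qed
  finally show False using aa_sum by simp
qed

lemma sum_list_neg: "sum_list (map uminus (u::int list)) = - sum_list u"
  by (induction u) auto

lemma neg_set: "set u \<subseteq> {-1,0,1::int} \<Longrightarrow> set (map uminus u) \<subseteq> {-1,0,1}"
  by (induction u) auto

lemma aa_neg: "aa r m (-s) = aa r m s"
proof -
  have invol: "\<And>u::int list. map uminus (map uminus u) = u" by (simp add: map_idI)
  have inj: "inj_on (map uminus) {u\<in>LL m. sum_list u = s}"
    by (rule inj_on_inverseI[where g="map uminus"]) (rule invol)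
  have img: "{u\<in>LL m. sum_list u = -s} = map uminus ` {u\<in>LL m. sum_list u = s}"
  proof
    show "{u\<in>LL m. sum_list u = -s} \<subseteq> map uminus ` {u\<in>LL m. sum_list u = s}"
    proof
      fix u assume u: "u \<in> {u\<in>LL m. sum_list u = -s}"
      have "map uminus u \<in> {u\<in>LL m. sum_list u = s}"
        using u neg_set by (simp add: LL_def sum_list_neg)
      then show "u \<in> map uminus ` {u\<in>LL m. sum_list u = s}"
        using invol[of u] by (metis image_eqI)
    qed
  next
    show "map uminus ` {u\<in>LL m. sum_list u = s} \<subseteq> {u\<in>LL m. sum_list u = -s}"
    proof
      fix v assume "v \<in> map uminus ` {u\<in>LL m. sum_list u = s}"
      then obtain u where u: "u \<in> LL m" "sum_list u = s" "v = map uminus u" by blast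
      then show "v \<in> {u\<in>LL m. sum_list u = -s}" using neg_set[of u] by (simp add: LL_def sum_list_neg)
    qed
  qed
  show ?thesis
    unfolding aa_def img by (subst sum.reindex[OF inj]) (simp add: weight_uminus)
qed

definition GG :: "nat \<Rightarrow> int list set" where
  "GG M = {w. set w \<subseteq> {-1,0,1} \<and> length w = M \<and> sig w (length w) = 0}"

lemma finite_GG: "finite (GG M)"
proof -
  have "GG M \<subseteq> LL M" unfolding GG_def LL_def by blast
  then show ?thesis by (rule finite_subset[OF _ finite_LL])
qed

lemma GG_bound:
  assumes r: "0 \<le> r"
  shows "((1+2*r)^m / (2*real m+1))^2 \<le> (\<Sum>w\<in>GG (2*m). weight r w)"
proof -
  obtain s where s: "(1+2*r)^m / (2*real m+1) \<le> aa r m s" using aa_big[OF r] by blast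
  let ?A = "{u\<in>LL m. sum_list u = s}"
  let ?B = "{u\<in>LL m. sum_list u = -s}"
  have inj: "inj_on (\<lambda>(u,v). u@v) (?A \<times> ?B)"
  proof (rule inj_onI)
    fix x y assume x: "x \<in> ?A \<times> ?B" and y: "y \<in> ?A \<times> ?B" and e: "(case x of (u,v) \<Rightarrow> u@v) = (case y of (u,v) \<Rightarrow> u@v)"
    obtain u1 v1 u2 v2 where xy: "x = (u1,v1)" "y = (u2,v2)" by fastforce
    have "length u1 = length u2" using x y xy by (simp add: LL_def)
    then show "x = y" using e xy by (simp add: append_eq_append_conv)
  qed
  have sub: "(\<lambda>(u,v). u@v) ` (?A \<times> ?B) \<subseteq> GG (2*m)"
  proof
    fix w assume "w \<in> (\<lambda>(u,v). u@v) ` (?A \<times> ?B)"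
    then obtain x where wx: "w = (\<lambda>(u,v). u@v) x" and x: "x \<in> ?A \<times> ?B" by (rule imageE)
    obtain u v where xuv: "x = (u,v)" by (cases x)
    have u: "set u \<subseteq> {-1,0,1}" "length u = m" "sum_list u = s" using x xuv unfolding LL_def by auto
    have v: "set v \<subseteq> {-1,0,1}" "length v = m" "sum_list v = -s" using x xuv unfolding LL_def by auto
    have "w = u@v" using wx xuv by simp
    then show "w \<in> GG (2*m)" using u v unfolding GG_def sig_def by simp
  qed
  have fA: "finite ?A" "finite ?B" using finite_LL by auto
  have "(\<Sum>w\<in>(\<lambda>(u,v). u@v) ` (?A \<times> ?B). weight r w) = (\<Sum>(u,v)\<in>?A \<times> ?B. weight r u * weight r v)"
    by (subst sum.reindex[OF inj]) (simp add: case_prod_beta weight_append)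
  also have "\<dots> = aa r m s * aa r m (-s)"
    unfolding aa_def by (simp only: sum_product sum.cartesian_product)
  also have "\<dots> = (aa r m s)^2" by (simp add: aa_neg power2_eq_square)
  finally have eq: "(\<Sum>w\<in>(\<lambda>(u,v). u@v) ` (?A \<times> ?B). weight r w) = (aa r m s)^2" .
  have "(\<Sum>w\<in>(\<lambda>(u,v). u@v) ` (?A \<times> ?B). weight r w) \<le> (\<Sum>w\<in>GG (2*m). weight r w)"
    by (rule sum_mono2[OF finite_GG sub]) (simp add: weight_nonneg r)
  moreover have "((1+2*r)^m / (2*real m+1))^2 \<le> (aa r m s)^2"
    by (rule power_mono[OF s]) (use r in simp)
  ultimately show ?thesis using eq by linarith
qed



lemma inj_cyc: "inj_on cyc (GG M)"
proof (rule inj_onI)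
  fix w w' assume w: "w \<in> GG M" and w': "w' \<in> GG M" and e: "cyc w = cyc w'"
  have lw: "length w = M" "length w' = M" using w w' by (auto simp: GG_def)
  have P: "Pt w k = Pt w' k" if "k \<le> 2*M+4" for k
    using nth_cyc[of k w] nth_cyc[of k w'] e lw that by simp
  have S: "sig w j = sig w' j" if "j \<le> M" for j
  proof -
    have "Pt w (Suc j) = Pt w' (Suc j)" using P that by simp
    then show ?thesis using that lw by (simp add: Pt_def)
  qed
  show "w = w'"
  proof (rule nth_equalityI)
    show "length w = length w'" using lw by simp
    fix i assume i: "i < length w"
    have "w ! i = sig w (Suc i) - sig w i" using sig_step[OF i] by simp
    also have "\<dots> = sig w' (Suc i) - sig w' i" using S[of i] S[of "Suc i"] i lw by simp
    also have "\<dots> = w' ! i" using sig_step[of i w'] i lw by simp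
    finally show "w ! i = w' ! i" .
  qed
qed

lemma B_gt:
  fixes p r :: real
  assumes r: "0 < r" "r \<le> 1/4" and p: "0 < p" "p \<le> r/12"
  shows "1 < (1-p)^2*(1-r)*(1+2*r)"
proof -
  have h1: "1 - 2*p \<le> (1-p)^2" by (simp add: power2_eq_square algebra_simps)
  have rr: "r*r \<le> r*(1/4)" using r by (intro mult_left_mono) auto
  have h2: "1 + r/2 \<le> (1-r)*(1+2*r)" using rr by (simp add: algebra_simps)
  have h3: "0 \<le> 1 - 2*p" using p r by simp
  have "(1-2*p)*(1+r/2) \<le> (1-p)^2*((1-r)*(1+2*r))"
    using h1 h2 h3 r by (intro mult_mono) auto
  moreover have pr: "p*r \<le> (r/12)*(1/4)" using p r by (intro mult_mono) auto
  moreover have "(1-2*p)*(1+r/2) = 1 + r/2 - 2*p - p*r" by (simp add: algebra_simps)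
  moreover have "1 < 1 + r/2 - 2*p - p*r" using pr p r by linarith
  ultimately show ?thesis by (simp add: mult.assoc)
qed

lemma asy: assumes "1 < (Q::real)" shows "filterlim (\<lambda>m::nat. Q^(2*m) / (2*real m+1)^2) at_top sequentially"
  using assms by real_asymp

lemma main_lemma:
  fixes p r :: real
  assumes r: "0 < r" "r \<le> 1/4" and p: "0 < p" "p \<le> r/12"
  shows "(\<Sum>\<^sub>\<infinity>T\<in>Toom0. emeasure (Mpr p r) {mu \<in> space (Mpr p r). present mu T}) = \<infinity>"
proof -
  define f where "f T = emeasure (Mpr p r) {mu \<in> space (Mpr p r). present mu T}" for T
  define K where "K = ((1-p)*r*p)^2"
  define C where "C = (1-p)^2*(1-r)"
  define B where "B = (1-p)^2*(1-r)*(1+2*r)"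
  have p1: "0 \<le> p" "p \<le> 1" "0 \<le> r" "r \<le> 1" using p r by auto
  have Kpos: "0 < K" unfolding K_def using p r by simp
  have Cpos: "0 \<le> C" unfolding C_def using p r by simp
  have B1: "1 < B" unfolding B_def by (rule B_gt[OF r p])
  define g where "g m = K * C^(2*m) * ((1+2*r)^m / (2*real m+1))^2" for m
  have geq: "g m = K * (B^(2*m) / (2*real m+1)^2)" for m
  proof -
    have "B = C*(1+2*r)" by (simp add: B_def C_def)
    then have b: "B^(2*m) = C^(2*m) * (1+2*r)^(2*m)" by (simp add: power_mult_distrib)
    have q: "((1+2*r)^m)^2 = (1+2*r)^(2*m)" by (simp add: power_mult[symmetric] mult.commute)
    have "g m = K * C^(2*m) * (((1+2*r)^m)^2 / (2*real m+1)^2)" by (simp add: g_def power_divide)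
    also have "\<dots> = K * (B^(2*m) / (2*real m+1)^2)" unfolding q b by simp
    finally show ?thesis .
  qed
  have lower: "ennreal (g m) \<le> infsum f Toom0" for m
  proof -
    let ?G = "GG (2*m)"
    have fin: "finite (cyc ` ?G)" using finite_GG by simp
    have sub: "cyc ` ?G \<subseteq> Toom0" using Toom0_cyc by auto
    have "sum f (cyc ` ?G) \<le> infsum f Toom0"
      unfolding nonneg_infsum_complete[of Toom0 f, OF zero_le]
      by (rule SUP_upper) (use fin sub in auto)
    moreover have "sum f (cyc ` ?G) = (\<Sum>w\<in>?G. f (cyc w))"
      by (rule sum.reindex[OF inj_cyc, unfolded comp_def])
    moreover have "ennreal (g m) \<le> (\<Sum>w\<in>?G. f (cyc w))"
    proof -
      have each: "ennreal (K * C^(2*m) * weight r w) \<le> f (cyc w)" if w: "w \<in> ?G" for w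
      proof -
        have ws: "set w \<subseteq> {-1,0,1}" and lw: "length w = 2*m" and s0: "sig w (length w) = 0"
          using w by (auto simp: GG_def)
        have "(\<Prod>k<2*length w+4. emeasure (measure_pmf (mu_pmf p r)) (SS w k))
            = (\<Prod>k<2*length w+4. ennreal (measure (measure_pmf (mu_pmf p r)) (SS w k)))"
          by (simp add: measure_pmf.emeasure_eq_measure)
        also have "\<dots> = ennreal (\<Prod>k<2*length w+4. measure (measure_pmf (mu_pmf p r)) (SS w k))"
          by (rule prod_ennreal) simp
        also have "\<dots> = ennreal (K * C^(2*m) * weight r w)"
          using prod_SS[OF p1, of w] lw by (simp add: K_def C_def)
        finally show ?thesis unfolding f_def using ev_bound[OF ws s0, of p r] by simp
      qed
      have "(\<Sum>w\<in>?G. ennreal (K * C^(2*m) * weight r w)) = ennreal (\<Sum>w\<in>?G. K * C^(2*m) * weight r w)"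
        by (rule sum_ennreal) (use Kpos Cpos weight_nonneg p1 in simp)
      also have "(\<Sum>w\<in>?G. K * C^(2*m) * weight r w) = K * C^(2*m) * (\<Sum>w\<in>?G. weight r w)"
        by (simp add: sum_distrib_left)
      finally have e2: "(\<Sum>w\<in>?G. ennreal (K * C^(2*m) * weight r w)) = ennreal (K * C^(2*m) * (\<Sum>w\<in>?G. weight r w))" .
      have "g m \<le> K * C^(2*m) * (\<Sum>w\<in>?G. weight r w)"
        unfolding g_def using GG_bound[OF p1(3), of m] Kpos Cpos
        by (intro mult_left_mono) auto
      then have "ennreal (g m) \<le> (\<Sum>w\<in>?G. ennreal (K * C^(2*m) * weight r w))"
        unfolding e2 by (rule ennreal_leI)
      also have "\<dots> \<le> (\<Sum>w\<in>?G. f (cyc w))"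
        by (rule sum_mono) (rule each)
      finally show ?thesis .
    qed
    ultimately show ?thesis by simp
  qed
  have lim: "filterlim (\<lambda>m::nat. B^(2*m) / (2*real m+1)^2) at_top sequentially"
    by (rule asy[OF B1])
  show ?thesis
  proof (rule ccontr)
    assume ninf: "\<not> ?thesis"
    then have "infsum f Toom0 < \<infinity>" unfolding f_def by (simp add: top.not_eq_extremum)
    then obtain y where y: "infsum f Toom0 = ennreal y" "0 \<le> y"
      by (cases "infsum f Toom0") auto
    have all: "\<forall>Z. \<forall>\<^sub>F m in sequentially. Z \<le> B^(2*m) / (2*real m+1)^2"
      using lim unfolding filterlim_at_top by blast
    then have "\<forall>\<^sub>F m in sequentially. y / K + 1 \<le> B^(2*m) / (2*real m+1)^2"
      by (rule spec)
    then obtain N where N: "\<And>n. N \<le> n \<Longrightarrow> y / K + 1 \<le> B^(2*n) / (2*real n+1)^2"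
      unfolding eventually_sequentially by blast
    define m where "m = N"
    have m: "y / K + 1 \<le> B^(2*m) / (2*real m+1)^2" using N[of N] by (simp add: m_def)
    have "ennreal (g m) \<le> ennreal y" using lower[of m] y(1) by simp
    then have "g m \<le> y" using y(2) by (simp add: ennreal_le_iff)
    moreover have "y < g m"
    proof -
      have "y / K < B^(2*m) / (2*real m+1)^2" using m by simp
      then have "K * (y / K) < K * (B^(2*m) / (2*real m+1)^2)" by (rule mult_strict_left_mono) (rule Kpos)
      moreover have "K * (y / K) = y" using Kpos by simp
      ultimately show ?thesis using geq[of m] by simp
    qed
    ultimately show False by simp
  qed
qed


theorem mainTheorem14:
  shows "\<exists>r'::real. 0 < r' \<and>
    (\<forall>r. 0 < r \<and> r \<le> r' \<and> r \<le> 1 \<longrightarrow>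
      (\<exists>p'::real. 0 < p' \<and>
        (\<forall>p. 0 < p \<and> p \<le> p' \<and> p \<le> 1 \<longrightarrow>
          (\<Sum>\<^sub>\<infinity>T\<in>Toom0. emeasure (Mpr p r) {mu \<in> space (Mpr p r). present mu T}) = \<infinity>)))"
  apply (rule exI[of _ "1/4::real"])
  apply (rule conjI)
   apply simp
  apply (intro allI impI)
  subgoal for r
    apply (rule exI[of _ "r/12"])
    apply (rule conjI)
     apply simp
    apply (intro allI impI)
    apply (rule main_lemma)
       apply auto
    done
  done

end
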